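(* Suppose $\Delta_{\mathfrak g}$ is one of the seven irreducible locally affine root systems $X_J^{(r)}$ of infinite rank, realized as below, and let $\lambda\in i\mathfrak t_{\mathfrak g}^*$ with $\lambda_c:=\lambda(c)>0$. Write $\lambda_j:=\lambda$-coordinate at $j\in J$ (i.e. $\lambda|_{\mathfrak t}$ corresponds to $j\mapsto\lambda_j=\lambda(E_j)$). Then $\lambda$ is $d$-minimal iff: $A_J^{(1)}$: $\sup_j\lambda_j-\inf_j\lambda_j\le\lambda_c$; $B_J^{(1)}$: $|\lambda_j|+|\lambda_k|\le\lambda_c$ for $j\neq k$; $C_J^{(1)}$: $|\lambda_j|\le\lambda_c$ for all $j$; $D_J^{(1)}$: $|\lambda_j|+|\lambda_k|\le\lambda_c$ for $j\ne k$; $B_J^{(2)}$: $|\lambda_j|\le\lambda_c$ for all $j$; $C_J^{(2)}$: $|\lambda_j|+|\lambda_k|\le2\lambda_c$ for $j\ne k$; $BC_J^{(2)}$: $|\lambda_j|\le\lambda_c$ for all $j$.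
   Context: Setting: $\mathfrak k$ a simple infinite-dimensional Hilbert–Lie algebra with normalized scalar product ($(\alpha,\alpha)=2$ for long roots), $\phi$ a finite order automorphism; $\mathfrak g=\widehat{\mathcal L}_\phi(\mathfrak k)$ the double extension $\mathbb R\times\mathcal L_\phi(\mathfrak k)\times\mathbb R$ of smooth $\phi$-twisted loops with bracket $[(z_1,\xi_1,t_1),(z_2,\xi_2,t_2)]=(\langle\xi_1',\xi_2\rangle,t_1\xi_2'-t_2\xi_1'+[\xi_1,\xi_2],0)$; $c=(i,0,0)$, $d=(0,0,-i)$; $\mathfrak t\subseteq\mathfrak k^\phi$ maximal abelian, $\mathfrak t_{\mathfrak g}=\mathbb R\oplus\mathfrak t\oplus\mathbb R$; $\mathfrak t_{\mathbb C}\cong\ell^2(J,\mathbb C)$ with coordinate functionals $\varepsilon_j$ and dual elements $E_j$. The compact roots are $(\alpha,n)$ with $(\alpha,n)(z,h,t)=\alpha(h)+itn$, $\alpha\ne0$ a $\mathfrak t$-weight on the $e^{2\pi in/N}$-eigenspace of $L(\phi)^{-1}$; they form $\Delta_{\mathfrak g}$. The seven systems: $X_J^{(1)}=X_J\times\mathbb Z$ for $X\in\{A,B,C,D\}$ with $A_J=\{\varepsilon_j-\varepsilon_k\}$, $B_J=\{\pm\varepsilon_j\pm\varepsilon_k,\pm\varepsilon_j\}$, $C_J=\{\pm\varepsilon_j\pm\varepsilon_k,\pm2\varepsilon_j\}$, $D_J=\{\pm\varepsilon_j\pm\varepsilon_k\}$ ($j\ne k$); $B_J^{(2)}=(B_J\times2\mathbb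 Z)\cup(\{\pm\varepsilon_j\}\times(2\mathbb Z+1))$; $C_J^{(2)}=(C_J\times2\mathbb Z)\cup(D_J\times(2\mathbb Z+1))$; $BC_J^{(2)}=(B_J\times2\mathbb Z)\cup(BC_J\times(2\mathbb Z+1))$, $BC_J=B_J\cup C_J$. In cases $C_J^{(1)},C_J^{(2)},BC_J^{(2)}$ the normalization gives $\|\varepsilon_j\|^2=1/2$, otherwise $\|\varepsilon_j\|^2=1$. Coroot of $(\alpha,n)$: $\check\alpha-\frac{2n}{(\alpha,\alpha)}c$. $\widehat{\mathcal W}$ is the group generated by reflections $\lambda\mapsto\lambda-\lambda(\check{\underline\alpha})\underline\alpha$, $\underline\alpha\in\Delta_{\mathfrak g}$. $\lambda\in i\mathfrak t_{\mathfrak g}^*$ (algebraic dual) is $d$-minimal if $\lambda(d)=\min(\widehat{\mathcal W}\lambda)(d)$. *)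

theory Defs
  imports "HOL-Analysis.Analysis"
begin

datatype rtype = A1 | B1 | C1 | D1 | B2 | C2 | BC2

text \<open>Coordinates on i t_g: an element (z, h, t) stands for z c + sum_j h_j E_j + t d,
  where h ranges over ell^2(J) (real coordinates w.r.t. the basis E_j dual to eps_j).\<close>
type_synonym 'j tg = "real \<times> ('j \<Rightarrow> real) \<times> real"

definition ell2 :: "('j \<Rightarrow> real) set" where
  "ell2 = {h. (\<lambda>j. (h j)^2) summable_on UNIV}"

definition tg_space :: "'j tg set" where
  "tg_space = {(z, h, t). h \<in> ell2}"

definition tg_add :: "'j tg \<Rightarrow> 'j tg \<Rightarrow> 'j tg" where
  "tg_add x y = (case x of (z1, h1, t1) \<Rightarrow> case y of (z2, h2, t2) \<Rightarrow>
      (z1 + z2, (\<lambda>j. h1 j + h2 j), t1 + t2))"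

definition tg_scale :: "real \<Rightarrow> 'j tg \<Rightarrow> 'j tg" where
  "tg_scale r x = (case x of (z, h, t) \<Rightarrow> (r * z, (\<lambda>j. r * h j), r * t))"

text \<open>Algebraic dual: linear (not necessarily continuous) real functionals on i t_g.\<close>
definition linear_functional :: "('j tg \<Rightarrow> real) \<Rightarrow> bool" where
  "linear_functional f \<longleftrightarrow>
     (\<forall>x\<in>tg_space. \<forall>y\<in>tg_space. f (tg_add x y) = f x + f y) \<and>
     (\<forall>r. \<forall>x\<in>tg_space. f (tg_scale r x) = r * f x)"

definition cc :: "'j tg" where "cc = (1, (\<lambda>_. 0), 0)"
definition dd :: "'j tg" where "dd = (0, (\<lambda>_. 0), 1)"

definition eps :: "'j \<Rightarrow> 'j \<Rightarrow> real" where
  "eps j = (\<lambda>i. if i = j then 1 else 0)"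

definition Ej :: "'j \<Rightarrow> 'j tg" where "Ej j = (0, eps j, 0)"

text \<open>Finite root systems (roots given by their coefficient functions w.r.t. eps_j).\<close>
definition Aset :: "('j \<Rightarrow> real) set" where
  "Aset = {(\<lambda>i. eps j i - eps k i) | j k. j \<noteq> k}"

definition Dset :: "('j \<Rightarrow> real) set" where
  "Dset = {(\<lambda>i. s * eps j i + t * eps k i) | j k s t.
             j \<noteq> k \<and> s \<in> {1, -1} \<and> t \<in> {1, -1}}"

definition shortset :: "('j \<Rightarrow> real) set" where
  "shortset = {(\<lambda>i. s * eps j i) | j s. s \<in> {1, -1}}"

definition longset :: "('j \<Rightarrow> real) set" where
  "longset = {(\<lambda>i. 2 * s * eps j i) | j s. s \<in> {1, -1}}"

definition Bset :: "('j \<Rightarrow> real) set" where "Bset = Dset \<union> shortset"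
definition Cset :: "('j \<Rightarrow> real) set" where "Cset = Dset \<union> longset"
definition BCset :: "('j \<Rightarrow> real) set" where "BCset = Bset \<union> Cset"

text \<open>Compact roots (alpha, n) of the locally affine root system.\<close>
definition roots :: "rtype \<Rightarrow> (('j \<Rightarrow> real) \<times> int) set" where
  "roots X = (case X of
      A1 \<Rightarrow> Aset \<times> UNIV
    | B1 \<Rightarrow> Bset \<times> UNIV
    | C1 \<Rightarrow> Cset \<times> UNIV
    | D1 \<Rightarrow> Dset \<times> UNIV
    | B2 \<Rightarrow> (Bset \<times> {n. even n}) \<union> (shortset \<times> {n. odd n})
    | C2 \<Rightarrow> (Cset \<times> {n. even n}) \<union> (Dset \<times> {n. odd n})
    | BC2 \<Rightarrow> (Bset \<times> {n. even n}) \<union> (BCset \<times> {n. odd n}))"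

text \<open>Normalization: the value of (eps_j, eps_j).\<close>
definition kappa :: "rtype \<Rightarrow> real" where
  "kappa X = (if X \<in> {C1, C2, BC2} then 1/2 else 1)"

definition sqsum :: "('j \<Rightarrow> real) \<Rightarrow> real" where
  "sqsum a = (\<Sum>j | a j \<noteq> 0. (a j)^2)"

text \<open>(alpha, alpha) for alpha = sum a_j eps_j.\<close>
definition rootnorm :: "rtype \<Rightarrow> ('j \<Rightarrow> real) \<Rightarrow> real" where
  "rootnorm X a = kappa X * sqsum a"

definition rootf :: "('j \<Rightarrow> real) \<times> int \<Rightarrow> 'j tg \<Rightarrow> real" where
  "rootf r x = (case r of (a, n) \<Rightarrow> case x of (z, h, t) \<Rightarrow>
      (\<Sum>j | a j \<noteq> 0. a j * h j) + t * of_int n)"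

text \<open>Coroot: check(alpha) - 2n/(alpha,alpha) c, where check(alpha) = 2 alpha^sharp/(alpha,alpha)
  and alpha^sharp is the element representing alpha via the scalar product
  ((E_j,E_k) = delta_jk / kappa).\<close>
definition coroot :: "rtype \<Rightarrow> ('j \<Rightarrow> real) \<times> int \<Rightarrow> 'j tg" where
  "coroot X r = (case r of (a, n) \<Rightarrow>
      (- 2 * of_int n / rootnorm X a,
       (\<lambda>j. 2 * (kappa X * a j) / rootnorm X a),
       0))"

definition refl :: "rtype \<Rightarrow> ('j \<Rightarrow> real) \<times> int \<Rightarrow> ('j tg \<Rightarrow> real) \<Rightarrow> ('j tg \<Rightarrow> real)" where
  "refl X r \<mu> = (\<lambda>x. \<mu> x - \<mu> (coroot X r) * rootf r x)"

text \<open>Orbit of lambda under the group generated by the reflections (the reflections are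
  involutions, so the orbit is the closure under reflections).\<close>
inductive_set orbit :: "rtype \<Rightarrow> ('j tg \<Rightarrow> real) \<Rightarrow> ('j tg \<Rightarrow> real) set"
  for X :: rtype and lam :: "'j tg \<Rightarrow> real" where
  base: "lam \<in> orbit X lam"
| step: "\<mu> \<in> orbit X lam \<Longrightarrow> r \<in> roots X \<Longrightarrow> refl X r \<mu> \<in> orbit X lam"

definition d_minimal :: "rtype \<Rightarrow> ('j tg \<Rightarrow> real) \<Rightarrow> bool" where
  "d_minimal X lam \<longleftrightarrow> (\<forall>\<mu>\<in>orbit X lam. lam dd \<le> \<mu> dd)"

definition dmin_cond :: "rtype \<Rightarrow> ('j tg \<Rightarrow> real) \<Rightarrow> bool" where
  "dmin_cond X lam = (let lc = lam cc; l = (\<lambda>j. lam (Ej j)) in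
    (case X of
      A1 \<Rightarrow> (SUP j. ereal (l j)) - (INF j. ereal (l j)) \<le> ereal lc
    | B1 \<Rightarrow> (\<forall>j k. j \<noteq> k \<longrightarrow> \<bar>l j\<bar> + \<bar>l k\<bar> \<le> lc)
    | C1 \<Rightarrow> (\<forall>j. \<bar>l j\<bar> \<le> lc)
    | D1 \<Rightarrow> (\<forall>j k. j \<noteq> k \<longrightarrow> \<bar>l j\<bar> + \<bar>l k\<bar> \<le> lc)
    | B2 \<Rightarrow> (\<forall>j. \<bar>l j\<bar> \<le> lc)
    | C2 \<Rightarrow> (\<forall>j k. j \<noteq> k \<longrightarrow> \<bar>l j\<bar> + \<bar>l k\<bar> \<le> 2 * lc)
    | BC2 \<Rightarrow> (\<forall>j. \<bar>l j\<bar> \<le> lc)))"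

end

theory Submission
  imports Defs
begin


lemma fin_ell2: assumes "finite S" "\<And>i. i \<notin> S \<Longrightarrow> h i = 0" shows "h \<in> ell2"
proof -
  have "(\<lambda>j. (h j)^2) summable_on S" using assms(1) by simp
  then show ?thesis unfolding ell2_def
    by (subst (asm) summable_on_cong_neutral[where T=UNIV and g="\<lambda>j. (h j)^2"]) (auto simp: assms(2))
qed

lemma lin_decomp:
  assumes lin: "linear_functional mu" and fin: "finite S"
  shows "(\<forall>i. i \<notin> S \<longrightarrow> h i = 0) \<longrightarrow> mu (z, h, 0) = z * mu cc + (\<Sum>i\<in>S. h i * mu (Ej i))"
  using fin
proof (induction S arbitrary: h z)
  case empty
  show ?case
  proof
    assume "\<forall>i. i \<notin> {} \<longrightarrow> h i = 0"
    then have h: "h = (\<lambda>_. 0)" by auto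
    have "(z, h, 0) = tg_scale z cc" by (simp add: h tg_scale_def cc_def)
    moreover have "cc \<in> tg_space" unfolding tg_space_def cc_def using fin_ell2[of "{}" "\<lambda>_. 0::real"] by auto
    ultimately have "mu (z, h, 0) = z * mu cc"
      using lin unfolding linear_functional_def by auto
    then show "mu (z, h, 0) = z * mu cc + (\<Sum>i\<in>{}. h i * mu (Ej i))" by simp
  qed
next
  case (insert j S)
  show ?case
  proof
    assume H: "\<forall>i. i \<notin> insert j S \<longrightarrow> h i = 0"
    define h' where "h' = h(j := 0)"
    have h'S: "\<forall>i. i \<notin> S \<longrightarrow> h' i = 0" using H by (auto simp: h'_def)
    have e: "(z, h, 0) = tg_add (z, h', 0) (tg_scale (h j) (Ej j))"
      by (auto simp: tg_add_def tg_scale_def Ej_def eps_def h'_def)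
    have m1: "(z, h', 0) \<in> tg_space" unfolding tg_space_def using fin_ell2[of S h'] h'S insert by auto
    have m2: "tg_scale (h j) (Ej j) \<in> tg_space" unfolding tg_space_def tg_scale_def Ej_def
      using fin_ell2[of "{j}" "\<lambda>i. h j * eps j i"] by (auto simp: eps_def)
    have m3: "Ej j \<in> tg_space" unfolding tg_space_def Ej_def
      using fin_ell2[of "{j}" "eps j"] by (auto simp: eps_def)
    have "mu (z, h, 0) = mu (z, h', 0) + h j * mu (Ej j)"
      using lin m1 m2 m3 unfolding linear_functional_def e by simp
    also have "mu (z, h', 0) = z * mu cc + (\<Sum>i\<in>S. h' i * mu (Ej i))" using insert.IH h'S by blast
    also have "(\<Sum>i\<in>S. h' i * mu (Ej i)) = (\<Sum>i\<in>S. h i * mu (Ej i))"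
      using insert.hyps by (intro sum.cong) (auto simp: h'_def)
    finally show "mu (z, h, 0) = z * mu cc + (\<Sum>i\<in>insert j S. h i * mu (Ej i))"
      using insert.hyps by simp
  qed
qed

lemma rootf_lin: "linear_functional (rootf r)"
  unfolding linear_functional_def rootf_def tg_add_def tg_scale_def
  by (auto split: prod.splits simp: sum.distrib algebra_simps sum_distrib_left)

lemma refl_lin: assumes "linear_functional mu" shows "linear_functional (refl X r mu)"
  using assms rootf_lin[of r] unfolding linear_functional_def refl_def by (auto simp: algebra_simps)



definition pv :: "real \<Rightarrow> real \<Rightarrow> 'j \<Rightarrow> 'j \<Rightarrow> 'j \<Rightarrow> real" where
  "pv \<alpha> \<beta> j k = (\<lambda>i. \<alpha> * eps j i + \<beta> * eps k i)"
definition sv :: "real \<Rightarrow> 'j \<Rightarrow> 'j \<Rightarrow> real" where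
  "sv \<gamma> j = (\<lambda>i. \<gamma> * eps j i)"

lemma kappa_pos: "kappa X > 0" by (simp add: kappa_def)

lemma pv_supp: assumes "j \<noteq> k" "\<alpha> \<noteq> 0" "\<beta> \<noteq> 0" shows "{i. pv \<alpha> \<beta> j k i \<noteq> 0} = {j, k}"
  using assms by (auto simp: pv_def eps_def)

lemma sv_supp: assumes "\<gamma> \<noteq> 0" shows "{i. sv \<gamma> j i \<noteq> 0} = {j}"
  using assms by (auto simp: sv_def eps_def)

lemma pv_sum: assumes "j \<noteq> k" "\<alpha> \<noteq> 0" "\<beta> \<noteq> 0"
  shows "(\<Sum>i | pv \<alpha> \<beta> j k i \<noteq> 0. pv \<alpha> \<beta> j k i * x i) = \<alpha> * x j + \<beta> * x k"
  using assms by (simp add: pv_supp) (simp add: pv_def eps_def)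

lemma sv_sum: assumes "\<gamma> \<noteq> 0"
  shows "(\<Sum>i | sv \<gamma> j i \<noteq> 0. sv \<gamma> j i * x i) = \<gamma> * x j"
  using assms by (simp add: sv_supp) (simp add: sv_def eps_def)

lemma pv_sqsum: assumes "j \<noteq> k" "\<alpha> \<in> {1,-1}" "\<beta> \<in> {1,-1}" shows "sqsum (pv \<alpha> \<beta> j k) = 2"
proof -
  have "sqsum (pv \<alpha> \<beta> j k) = (\<Sum>i | pv \<alpha> \<beta> j k i \<noteq> 0. pv \<alpha> \<beta> j k i * pv \<alpha> \<beta> j k i)"
    unfolding sqsum_def by (simp add: power2_eq_square)
  also have "\<dots> = \<alpha> * pv \<alpha> \<beta> j k j + \<beta> * pv \<alpha> \<beta> j k k" using assms by (intro pv_sum) auto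
  also have "\<dots> = 2" using assms by (auto simp: pv_def eps_def)
  finally show ?thesis .
qed

lemma sv_sqsum: assumes "\<gamma> \<noteq> 0" shows "sqsum (sv \<gamma> j) = \<gamma>^2"
  unfolding sqsum_def using assms by (simp add: sv_supp) (simp add: sv_def eps_def)

lemma rootf_E: assumes "finite {i. a i \<noteq> 0}" shows "rootf (a, n) (Ej m) = a m"
proof -
  have "(\<Sum>i | a i \<noteq> 0. a i * eps m i) = (\<Sum>i\<in>{i. a i \<noteq> 0} \<inter> {m}. a i)"
    using assms by (intro sum.mono_neutral_cong_right) (auto simp: eps_def)
  then show ?thesis unfolding rootf_def Ej_def by (cases "a m = 0") auto
qed

lemma rootf_dd: "rootf (a, n) dd = of_int n" unfolding rootf_def dd_def by simp
lemma rootf_cc: "rootf (a, n) cc = 0" unfolding rootf_def cc_def by simp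

lemma coroot_pv: assumes "j \<noteq> k" "\<alpha> \<in> {1,-1}" "\<beta> \<in> {1,-1}"
  shows "coroot X (pv \<alpha> \<beta> j k, n) = (- of_int n / kappa X, pv \<alpha> \<beta> j k, 0)"
  using pv_sqsum[OF assms] kappa_pos[of X] unfolding coroot_def rootnorm_def by (auto simp: field_simps)

lemma coroot_sv: assumes "\<gamma> \<noteq> 0"
  shows "coroot X (sv \<gamma> j, n) = (- 2 * of_int n / (kappa X * \<gamma>^2), sv (2 / \<gamma>) j, 0)"
proof -
  have s: "sqsum (sv \<gamma> j) = \<gamma>^2" using sv_sqsum[OF assms] .
  have "coroot X (sv \<gamma> j, n) = (-2 * of_int n/(kappa X * \<gamma>^2), \<lambda>i. 2 * (kappa X * sv \<gamma> j i)/(kappa X * \<gamma>^2), 0)"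
    using kappa_pos[of X] by (simp add: coroot_def rootnorm_def s del: times_divide_eq_right)
  also have "(\<lambda>i. 2 * (kappa X * sv \<gamma> j i)/(kappa X * \<gamma>^2)) = sv (2 / \<gamma>) j"
    using kappa_pos[of X] assms by (auto simp: sv_def fun_eq_iff field_simps power2_eq_square)
  finally show ?thesis .
qed

lemma lin_decomp': assumes "linear_functional mu" "finite S" "\<And>i. i \<notin> S \<Longrightarrow> h i = 0"
  shows "mu (z, h, 0) = z * mu cc + (\<Sum>i\<in>S. h i * mu (Ej i))"
  using lin_decomp[OF assms(1,2)] assms(3) by blast

lemma mu_coroot_pv: assumes "linear_functional mu" "j \<noteq> k" "\<alpha> \<in> {1,-1}" "\<beta> \<in> {1,-1}"
  shows "mu (coroot X (pv \<alpha> \<beta> j k, n)) = \<alpha> * mu (Ej j) + \<beta> * mu (Ej k) - of_int n / kappa X * mu cc"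
proof -
  have "mu (coroot X (pv \<alpha> \<beta> j k, n)) = (- of_int n / kappa X) * mu cc + (\<Sum>i\<in>{j,k}. pv \<alpha> \<beta> j k i * mu (Ej i))"
    unfolding coroot_pv[OF assms(2-4)] using assms(3,4)
    by (intro lin_decomp'[OF assms(1)]) (auto simp: pv_def eps_def)
  then show ?thesis using assms by (simp add: pv_def eps_def)
qed

lemma mu_coroot_sv: assumes "linear_functional mu" "\<gamma> \<noteq> 0"
  shows "mu (coroot X (sv \<gamma> j, n)) = 2 / \<gamma> * mu (Ej j) - 2 * of_int n / (kappa X * \<gamma>^2) * mu cc"
proof -
  have "mu (coroot X (sv \<gamma> j, n)) = (- 2 * of_int n / (kappa X * \<gamma>^2)) * mu cc + (\<Sum>i\<in>{j}. sv (2/\<gamma>) j i * mu (Ej i))"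
    unfolding coroot_sv[OF assms(2)]
    by (intro lin_decomp'[OF assms(1)]) (auto simp: sv_def eps_def)
  then show ?thesis using assms by (simp add: sv_def eps_def)
qed

lemma refl_pv: fixes X :: rtype and n :: int assumes "linear_functional mu" "j \<noteq> k" "\<alpha> \<in> {1,-1}" "\<beta> \<in> {1,-1}"
  defines "p \<equiv> \<alpha> * mu (Ej j) + \<beta> * mu (Ej k) - of_int n / kappa X * mu cc"
  shows "refl X (pv \<alpha> \<beta> j k, n) mu (Ej i) = mu (Ej i) - p * pv \<alpha> \<beta> j k i"
    "refl X (pv \<alpha> \<beta> j k, n) mu dd = mu dd - p * of_int n"
    "refl X (pv \<alpha> \<beta> j k, n) mu cc = mu cc"
proof -
  have f: "finite {i. pv \<alpha> \<beta> j k i \<noteq> 0}" using pv_supp[OF assms(2)] assms(3,4) by auto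
  show "refl X (pv \<alpha> \<beta> j k, n) mu (Ej i) = mu (Ej i) - p * pv \<alpha> \<beta> j k i"
    unfolding refl_def p_def mu_coroot_pv[OF assms(1-4)] rootf_E[OF f] by simp
  show "refl X (pv \<alpha> \<beta> j k, n) mu dd = mu dd - p * of_int n"
    unfolding refl_def p_def mu_coroot_pv[OF assms(1-4)] rootf_dd by simp
  show "refl X (pv \<alpha> \<beta> j k, n) mu cc = mu cc"
    unfolding refl_def rootf_cc by simp
qed

lemma refl_sv: fixes X :: rtype and n :: int and j :: 'j assumes "linear_functional mu" "\<gamma> \<noteq> 0"
  defines "p \<equiv> 2 / \<gamma> * mu (Ej j) - 2 * of_int n / (kappa X * \<gamma>^2) * mu cc"
  shows "refl X (sv \<gamma> j, n) mu (Ej i) = mu (Ej i) - p * sv \<gamma> j i"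
    "refl X (sv \<gamma> j, n) mu dd = mu dd - p * of_int n"
    "refl X (sv \<gamma> j, n) mu cc = mu cc"
proof -
  have f: "finite {i. sv \<gamma> j i \<noteq> 0}" by (simp add: sv_supp[OF assms(2)])
  show "refl X (sv \<gamma> j, n) mu (Ej i) = mu (Ej i) - p * sv \<gamma> j i"
    unfolding refl_def p_def mu_coroot_sv[OF assms(1-2)] rootf_E[OF f] by simp
  show "refl X (sv \<gamma> j, n) mu dd = mu dd - p * of_int n"
    unfolding refl_def p_def mu_coroot_sv[OF assms(1-2)] rootf_dd by simp
  show "refl X (sv \<gamma> j, n) mu cc = mu cc"
    unfolding refl_def rootf_cc by simp
qed



definition Mf :: "rtype \<Rightarrow> real" where "Mf X = (if X \<in> {A1, B1, D1} then 1 else 2)"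
definition scond :: "rtype \<Rightarrow> int \<Rightarrow> bool" where
  "scond X s = (case X of A1 \<Rightarrow> s = 0 | B1 \<Rightarrow> even s | D1 \<Rightarrow> even s | C2 \<Rightarrow> even s | _ \<Rightarrow> True)"
definition Tq :: "real \<Rightarrow> real \<Rightarrow> int \<Rightarrow> real" where
  "Tq B l m = 2 * l * (B * of_int m) + (B * of_int m)^2"

definition dat :: "rtype \<Rightarrow> ('j tg \<Rightarrow> real) \<Rightarrow> ('j tg \<Rightarrow> real) \<Rightarrow> ('j \<Rightarrow> 'j) \<Rightarrow> ('j \<Rightarrow> int) \<Rightarrow> ('j \<Rightarrow> int) \<Rightarrow> 'j set \<Rightarrow> bool" where
  "dat X lam mu \<sigma> e m F \<longleftrightarrow> linear_functional mu \<and> mu cc = lam cc \<and> bij \<sigma> \<and> (\<forall>i. e i = 1 \<or> e i = -1)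
    \<and> (X = A1 \<longrightarrow> (\<forall>i. e i = 1)) \<and> finite F \<and> (\<forall>i. i \<notin> F \<longrightarrow> m i = 0) \<and> scond X (sum m F)
    \<and> (\<forall>i. mu (Ej i) = of_int (e i) * (lam (Ej (\<sigma> i)) + Mf X * lam cc * of_int (m (\<sigma> i))))
    \<and> mu dd = lam dd + kappa X / (2 * lam cc) * (\<Sum>i\<in>F. Tq (Mf X * lam cc) (lam (Ej i)) (m i))"

lemma sum_two:
  fixes f g :: "'a \<Rightarrow> 'b::ab_group_add"
  assumes "finite F" "a \<in> F" "b \<in> F" "a \<noteq> b" "\<And>i. i \<noteq> a \<Longrightarrow> i \<noteq> b \<Longrightarrow> g i = f i"
  shows "sum g F = sum f F + (g a - f a) + (g b - f b)"
proof -
  have "sum (\<lambda>i. g i - f i) F = sum (\<lambda>i. g i - f i) {a, b}"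
    using assms by (intro sum.mono_neutral_right) auto
  then show ?thesis using assms(4) by (simp add: sum_subtractf algebra_simps)
qed

lemma sum_one:
  fixes f g :: "'a \<Rightarrow> 'b::ab_group_add"
  assumes "finite F" "a \<in> F" "\<And>i. i \<noteq> a \<Longrightarrow> g i = f i"
  shows "sum g F = sum f F + (g a - f a)"
proof -
  have "sum (\<lambda>i. g i - f i) F = sum (\<lambda>i. g i - f i) {a}"
    using assms by (intro sum.mono_neutral_right) auto
  then show ?thesis by (simp add: sum_subtractf algebra_simps)
qed

lemma sum_ext:
  fixes f :: "'a \<Rightarrow> 'b::comm_monoid_add"
  assumes "finite F'" "F \<subseteq> F'" "\<And>i. i \<notin> F \<Longrightarrow> f i = 0"
  shows "sum f F' = sum f F"
  using sum.mono_neutral_left[of F' F f] assms by auto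

lemma sign_cases: "(x::int) = 1 \<or> x = -1 \<Longrightarrow> of_int x * (of_int x :: real) = 1"
  by auto



lemma step_pv:
  fixes \<alpha> \<beta> q n :: int
  assumes D: "dat X lam mu \<sigma> e m F" and jk: "j \<noteq> k"
    and al: "\<alpha> = 1 \<or> \<alpha> = -1" and be: "\<beta> = 1 \<or> \<beta> = -1"
    and q: "of_int n * lam cc / kappa X = Mf X * lam cc * of_int q"
    and sc: "scond X (sum m F - q * (\<alpha> * e j + \<beta> * e k))"
    and A: "X = A1 \<longrightarrow> \<alpha> * \<beta> = -1"
    and pos: "lam cc > 0"
  shows "\<exists>\<sigma>' e' m' F'. dat X lam (refl X (pv (of_int \<alpha>) (of_int \<beta>) j k, n) mu) \<sigma>' e' m' F'"
proof -
  define B where "B = Mf X * lam cc"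
  define l where "l i = lam (Ej i)" for i
  define v where "v i = mu (Ej i)" for i
  define \<kappa> where "\<kappa> = kappa X"
  have kp: "\<kappa> > 0" unfolding \<kappa>_def by (rule kappa_pos)
  have lin: "linear_functional mu" and mcc: "mu cc = lam cc" and bs: "bij \<sigma>"
    and es: "\<forall>i. e i = 1 \<or> e i = -1" and eA: "X = A1 \<longrightarrow> (\<forall>i. e i = 1)" and fF: "finite F"
    and mF: "\<forall>i. i \<notin> F \<longrightarrow> m i = 0" and scF: "scond X (sum m F)"
    and vE: "\<And>i. v i = of_int (e i) * (l (\<sigma> i) + B * of_int (m (\<sigma> i)))"
    and vd: "mu dd = lam dd + \<kappa> / (2 * lam cc) * (\<Sum>i\<in>F. Tq B (l i) (m i))"
    using D unfolding dat_def B_def l_def v_def \<kappa>_def by auto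
  have qB: "of_int n * lam cc / \<kappa> = B * of_int q" using q unfolding B_def \<kappa>_def .
  have a1: "of_int \<alpha> \<in> {1, -1::real}" "of_int \<beta> \<in> {1, -1::real}" using al be by auto
  define p where "p = of_int \<alpha> * v j + of_int \<beta> * v k - of_int n / \<kappa> * lam cc"
  let ?mu' = "refl X (pv (of_int \<alpha>) (of_int \<beta>) j k, n) mu"
  have R1: "\<And>i. ?mu' (Ej i) = v i - p * pv (of_int \<alpha>) (of_int \<beta>) j k i"
    using refl_pv(1)[OF lin jk a1] unfolding p_def v_def \<kappa>_def mcc by simp
  have R2: "?mu' dd = mu dd - p * of_int n"
    using refl_pv(2)[OF lin jk a1] unfolding p_def v_def \<kappa>_def mcc by simp
  have R3: "?mu' cc = lam cc" using refl_pv(3)[OF lin jk a1] mcc by simp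
  define \<tau> where "\<tau> i = (if i = j then k else if i = k then j else i)" for i
  define \<sigma>' where "\<sigma>' = \<sigma> \<circ> \<tau>"
  define e' where "e' i = (if i = j then - \<alpha> * \<beta> * e k else if i = k then - \<alpha> * \<beta> * e j else e i)" for i
  define m' where "m' i = m i - (if i = \<sigma> j then q * \<alpha> * e j else 0) - (if i = \<sigma> k then q * \<beta> * e k else 0)" for i
  define F' where "F' = insert (\<sigma> j) (insert (\<sigma> k) F)"
  have sjk: "\<sigma> j \<noteq> \<sigma> k" using bs jk by (metis bij_pointE)
  have bs': "bij \<sigma>'" unfolding \<sigma>'_def
    by (rule bij_comp[OF _ bs], rule involuntory_imp_bij) (auto simp: \<tau>_def)
  have es': "\<forall>i. e' i = 1 \<or> e' i = -1" using es al be unfolding e'_def by auto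
  have eA': "X = A1 \<longrightarrow> (\<forall>i. e' i = 1)" using eA A unfolding e'_def by auto
  have fF': "finite F'" using fF unfolding F'_def by auto
  have mF': "\<forall>i. i \<notin> F' \<longrightarrow> m' i = 0" using mF unfolding F'_def m'_def by auto
  have sm': "sum m' F' = sum m F - q * (\<alpha> * e j + \<beta> * e k)"
  proof -
    have "sum m' F' = sum m F' + (m' (\<sigma> j) - m (\<sigma> j)) + (m' (\<sigma> k) - m (\<sigma> k))"
      using fF' sjk by (intro sum_two) (auto simp: F'_def m'_def)
    also have "sum m F' = sum m F" using fF' mF by (intro sum_ext) (auto simp: F'_def)
    finally show ?thesis using sjk by (simp add: m'_def algebra_simps)
  qed
  have ej: "of_int (e j) * of_int (e j) = (1::real)" "of_int (e k) * of_int (e k) = (1::real)"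
    using es by (auto intro: sign_cases)
  have aa: "of_int \<alpha> * of_int \<alpha> = (1::real)" "of_int \<beta> * of_int \<beta> = (1::real)"
    using al be by (auto intro: sign_cases)
  have coordj: "?mu' (Ej j) = of_int (e' j) * (l (\<sigma>' j) + B * of_int (m' (\<sigma>' j)))"
  proof -
    have "?mu' (Ej j) = v j - p * of_int \<alpha>" using R1[of j] jk by (simp add: pv_def eps_def)
    also have "\<dots> = - of_int \<alpha> * of_int \<beta> * v k + of_int \<alpha> * (B * of_int q)"
      unfolding p_def qB[symmetric] using aa by (simp add: algebra_simps)
    also have "\<dots> = of_int (e' j) * (l (\<sigma>' j) + B * of_int (m' (\<sigma>' j)))"
      using sjk jk unfolding vE e'_def \<sigma>'_def \<tau>_def m'_def
      using ej aa by (simp add: algebra_simps)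
    finally show ?thesis .
  qed
  have coordk: "?mu' (Ej k) = of_int (e' k) * (l (\<sigma>' k) + B * of_int (m' (\<sigma>' k)))"
  proof -
    have "?mu' (Ej k) = v k - p * of_int \<beta>" using R1[of k] jk by (simp add: pv_def eps_def)
    also have "\<dots> = - of_int \<alpha> * of_int \<beta> * v j + of_int \<beta> * (B * of_int q)"
      unfolding p_def qB[symmetric] using aa by (simp add: algebra_simps)
    also have "\<dots> = of_int (e' k) * (l (\<sigma>' k) + B * of_int (m' (\<sigma>' k)))"
      using sjk jk unfolding vE e'_def \<sigma>'_def \<tau>_def m'_def
      using ej aa by (simp add: algebra_simps)
    finally show ?thesis .
  qed
  have coord: "\<forall>i. ?mu' (Ej i) = of_int (e' i) * (l (\<sigma>' i) + B * of_int (m' (\<sigma>' i)))"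
  proof
    fix i
    show "?mu' (Ej i) = of_int (e' i) * (l (\<sigma>' i) + B * of_int (m' (\<sigma>' i)))"
    proof (cases "i = j \<or> i = k")
      case True then show ?thesis using coordj coordk by auto
    next
      case False
      then have "\<sigma> i \<noteq> \<sigma> j" "\<sigma> i \<noteq> \<sigma> k" using bs by (auto dest: bij_is_inj injD)
      then show ?thesis using False R1[of i] vE[of i]
        by (simp add: pv_def eps_def e'_def \<sigma>'_def \<tau>_def m'_def)
    qed
  qed
  have dj: "Tq B (l (\<sigma> j)) (m' (\<sigma> j)) - Tq B (l (\<sigma> j)) (m (\<sigma> j)) = - 2 * B * of_int q * of_int \<alpha> * v j + (B * of_int q)^2"
    using sjk vE[of j] ej aa unfolding Tq_def m'_def by (simp add: algebra_simps power2_eq_square)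
  have dk: "Tq B (l (\<sigma> k)) (m' (\<sigma> k)) - Tq B (l (\<sigma> k)) (m (\<sigma> k)) = - 2 * B * of_int q * of_int \<beta> * v k + (B * of_int q)^2"
    using sjk vE[of k] ej aa unfolding Tq_def m'_def by (simp add: algebra_simps power2_eq_square)
  have sT: "(\<Sum>i\<in>F'. Tq B (l i) (m' i)) = (\<Sum>i\<in>F. Tq B (l i) (m i))
      + (- 2 * B * of_int q * of_int \<alpha> * v j + (B * of_int q)^2) + (- 2 * B * of_int q * of_int \<beta> * v k + (B * of_int q)^2)"
  proof -
    have "(\<Sum>i\<in>F'. Tq B (l i) (m' i)) = (\<Sum>i\<in>F'. Tq B (l i) (m i))
       + (Tq B (l (\<sigma> j)) (m' (\<sigma> j)) - Tq B (l (\<sigma> j)) (m (\<sigma> j))) + (Tq B (l (\<sigma> k)) (m' (\<sigma> k)) - Tq B (l (\<sigma> k)) (m (\<sigma> k)))"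
      using fF' sjk by (intro sum_two) (auto simp: F'_def m'_def)
    also have "(\<Sum>i\<in>F'. Tq B (l i) (m i)) = (\<Sum>i\<in>F. Tq B (l i) (m i))"
      using fF' mF by (intro sum_ext) (auto simp: F'_def Tq_def)
    finally show ?thesis unfolding dj dk .
  qed
  have ddv: "?mu' dd = lam dd + \<kappa> / (2 * lam cc) * (\<Sum>i\<in>F'. Tq B (l i) (m' i))"
  proof -
    have nq: "of_int n = \<kappa> * B * of_int q / lam cc" using qB kp pos by (simp add: field_simps)
    have "?mu' dd = mu dd - p * of_int n" by (rule R2)
    also have "p * of_int n = - \<kappa> / (2 * lam cc) * ((- 2 * B * of_int q * of_int \<alpha> * v j + (B * of_int q)^2) + (- 2 * B * of_int q * of_int \<beta> * v k + (B * of_int q)^2))"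
      unfolding p_def nq using kp pos by (simp add: field_simps power2_eq_square)
    finally show ?thesis unfolding vd sT by (simp add: algebra_simps)
  qed
  have "dat X lam ?mu' \<sigma>' e' m' F'"
    unfolding dat_def using refl_lin[OF lin] R3 bs' es' eA' fF' mF' sc sm' coord ddv
    unfolding B_def l_def \<kappa>_def by auto
  then show ?thesis by blast
qed



lemma step_sv:
  fixes \<gamma> q n :: int
  assumes D: "dat X lam mu \<sigma> e m F" and g0: "\<gamma> \<noteq> 0"
    and q: "2 * of_int n * lam cc / (kappa X * of_int \<gamma>) = Mf X * lam cc * of_int q"
    and sc: "scond X (sum m F - q * e j)"
    and A: "X \<noteq> A1"
    and pos: "lam cc > 0"
  shows "\<exists>\<sigma>' e' m' F'. dat X lam (refl X (sv (of_int \<gamma>) j, n) mu) \<sigma>' e' m' F'"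
proof -
  define B where "B = Mf X * lam cc"
  define l where "l i = lam (Ej i)" for i
  define v where "v i = mu (Ej i)" for i
  define \<kappa> where "\<kappa> = kappa X"
  have kp: "\<kappa> > 0" unfolding \<kappa>_def by (rule kappa_pos)
  have lin: "linear_functional mu" and mcc: "mu cc = lam cc" and bs: "bij \<sigma>"
    and es: "\<forall>i. e i = 1 \<or> e i = -1" and fF: "finite F"
    and mF: "\<forall>i. i \<notin> F \<longrightarrow> m i = 0" and scF: "scond X (sum m F)"
    and vE: "\<And>i. v i = of_int (e i) * (l (\<sigma> i) + B * of_int (m (\<sigma> i)))"
    and vd: "mu dd = lam dd + \<kappa> / (2 * lam cc) * (\<Sum>i\<in>F. Tq B (l i) (m i))"
    using D unfolding dat_def B_def l_def v_def \<kappa>_def by auto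
  have g0': "(of_int \<gamma> :: real) \<noteq> 0" using g0 by simp
  have qB: "2 * of_int n * lam cc / (\<kappa> * of_int \<gamma>) = B * of_int q" using q unfolding B_def \<kappa>_def .
  define p where "p = 2 / of_int \<gamma> * v j - 2 * of_int n / (\<kappa> * (of_int \<gamma>)^2) * lam cc"
  let ?mu' = "refl X (sv (of_int \<gamma>) j, n) mu"
  have R1: "\<And>i. ?mu' (Ej i) = v i - p * sv (of_int \<gamma>) j i"
    using refl_sv(1)[OF lin g0'] unfolding p_def v_def \<kappa>_def mcc by simp
  have R2: "?mu' dd = mu dd - p * of_int n"
    using refl_sv(2)[OF lin g0'] unfolding p_def v_def \<kappa>_def mcc by simp
  have R3: "?mu' cc = lam cc" using refl_sv(3)[OF lin g0'] mcc by simp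
  define e' where "e' i = (if i = j then - e j else e i)" for i
  define m' where "m' i = m i - (if i = \<sigma> j then q * e j else 0)" for i
  define F' where "F' = insert (\<sigma> j) F"
  have es': "\<forall>i. e' i = 1 \<or> e' i = -1" using es unfolding e'_def by auto
  have eA': "X = A1 \<longrightarrow> (\<forall>i. e' i = 1)" using A by auto
  have fF': "finite F'" using fF unfolding F'_def by auto
  have mF': "\<forall>i. i \<notin> F' \<longrightarrow> m' i = 0" using mF unfolding F'_def m'_def by auto
  have sm': "sum m' F' = sum m F - q * e j"
  proof -
    have "sum m' F' = sum m F' + (m' (\<sigma> j) - m (\<sigma> j))"
      using fF' by (intro sum_one) (auto simp: F'_def m'_def)
    also have "sum m F' = sum m F" using fF' mF by (intro sum_ext) (auto simp: F'_def)
    finally show ?thesis by (simp add: m'_def algebra_simps)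
  qed
  have ej: "of_int (e j) * of_int (e j) = (1::real)"
    using es by (auto intro: sign_cases)
  have coordj: "?mu' (Ej j) = of_int (e' j) * (l (\<sigma> j) + B * of_int (m' (\<sigma> j)))"
  proof -
    have "?mu' (Ej j) = v j - p * of_int \<gamma>" using R1[of j] by (simp add: sv_def eps_def)
    also have "\<dots> = - v j + B * of_int q"
      unfolding p_def qB[symmetric] using g0' kp by (simp add: field_simps power2_eq_square)
    also have "\<dots> = of_int (e' j) * (l (\<sigma> j) + B * of_int (m' (\<sigma> j)))"
      unfolding vE e'_def m'_def using ej by (simp add: algebra_simps)
    finally show ?thesis .
  qed
  have coord: "\<forall>i. ?mu' (Ej i) = of_int (e' i) * (l (\<sigma> i) + B * of_int (m' (\<sigma> i)))"
  proof
    fix i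
    show "?mu' (Ej i) = of_int (e' i) * (l (\<sigma> i) + B * of_int (m' (\<sigma> i)))"
    proof (cases "i = j")
      case True then show ?thesis using coordj by auto
    next
      case False
      then have "\<sigma> i \<noteq> \<sigma> j" using bs by (auto dest: bij_is_inj injD)
      then show ?thesis using False R1[of i] vE[of i]
        by (simp add: sv_def eps_def e'_def m'_def)
    qed
  qed
  have dj: "Tq B (l (\<sigma> j)) (m' (\<sigma> j)) - Tq B (l (\<sigma> j)) (m (\<sigma> j)) = - 2 * B * of_int q * v j + (B * of_int q)^2"
    using vE[of j] ej unfolding Tq_def m'_def by (simp add: algebra_simps power2_eq_square)
  have sT: "(\<Sum>i\<in>F'. Tq B (l i) (m' i)) = (\<Sum>i\<in>F. Tq B (l i) (m i))
      + (- 2 * B * of_int q * v j + (B * of_int q)^2)"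
  proof -
    have "(\<Sum>i\<in>F'. Tq B (l i) (m' i)) = (\<Sum>i\<in>F'. Tq B (l i) (m i))
       + (Tq B (l (\<sigma> j)) (m' (\<sigma> j)) - Tq B (l (\<sigma> j)) (m (\<sigma> j)))"
      using fF' by (intro sum_one) (auto simp: F'_def m'_def)
    also have "(\<Sum>i\<in>F'. Tq B (l i) (m i)) = (\<Sum>i\<in>F. Tq B (l i) (m i))"
      using fF' mF by (intro sum_ext) (auto simp: F'_def Tq_def)
    finally show ?thesis unfolding dj .
  qed
  have ddv: "?mu' dd = lam dd + \<kappa> / (2 * lam cc) * (\<Sum>i\<in>F'. Tq B (l i) (m' i))"
  proof -
    have nq: "of_int n = \<kappa> * of_int \<gamma> * B * of_int q / (2 * lam cc)" using qB kp pos g0' by (simp add: field_simps)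
    have "?mu' dd = mu dd - p * of_int n" by (rule R2)
    also have "p * of_int n = - \<kappa> / (2 * lam cc) * (- 2 * B * of_int q * v j + (B * of_int q)^2)"
      unfolding p_def nq using kp pos g0' by (simp add: field_simps power2_eq_square)
    finally show ?thesis unfolding vd sT by (simp add: algebra_simps)
  qed
  have "dat X lam ?mu' \<sigma> e' m' F'"
    unfolding dat_def using refl_lin[OF lin] R3 bs es' eA' fF' mF' sc sm' coord ddv
    unfolding B_def l_def \<kappa>_def by auto
  then show ?thesis by blast
qed



lemma s2i: "(s::real) \<in> {1, -1} \<Longrightarrow> \<exists>a::int. (a = 1 \<or> a = -1) \<and> s = of_int a"
  by (auto intro: exI[of _ 1] exI[of _ "-1"])

lemma Dset_form: "a \<in> Dset \<Longrightarrow> \<exists>\<alpha> \<beta> j k. j \<noteq> k \<and> (\<alpha> = 1 \<or> \<alpha> = -1) \<and> (\<beta> = 1 \<or> \<beta> = (-1::int)) \<and> a = pv (of_int \<alpha>) (of_int \<beta>) j k"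
proof -
  assume "a \<in> Dset"
  then obtain j k s t where h: "a = (\<lambda>i. s * eps j i + t * eps k i)" "j \<noteq> k" "s \<in> {1,-1}" "t \<in> {1,-1}"
    unfolding Dset_def by blast
  obtain \<alpha> where al: "(\<alpha> = 1 \<or> \<alpha> = -1) \<and> s = of_int \<alpha>" using s2i h(3) by blast
  obtain \<beta> where be: "(\<beta> = 1 \<or> \<beta> = -1) \<and> t = of_int \<beta>" using s2i h(4) by blast
  have "a = pv (of_int \<alpha>) (of_int \<beta>) j k" unfolding pv_def h(1) using al be by simp
  then show ?thesis using h(2) al be by blast
qed

lemma Aset_form: "a \<in> Aset \<Longrightarrow> \<exists>j k. j \<noteq> k \<and> a = pv (of_int 1) (of_int (-1)) j k"
  unfolding Aset_def pv_def by auto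

lemma short_form: "a \<in> shortset \<Longrightarrow> \<exists>\<gamma> j. (\<gamma> = 1 \<or> \<gamma> = (-1::int)) \<and> a = sv (of_int \<gamma>) j"
proof -
  assume "a \<in> shortset"
  then obtain j s where h: "a = (\<lambda>i. s * eps j i)" "s \<in> {1,-1}" unfolding shortset_def by blast
  obtain \<alpha> where al: "(\<alpha> = 1 \<or> \<alpha> = -1) \<and> s = of_int \<alpha>" using s2i h(2) by blast
  have "a = sv (of_int \<alpha>) j" unfolding sv_def h(1) using al by simp
  then show ?thesis using al by blast
qed

lemma long_form: "a \<in> longset \<Longrightarrow> \<exists>\<gamma> j. (\<gamma> = 2 \<or> \<gamma> = (-2::int)) \<and> a = sv (of_int \<gamma>) j"
proof -
  assume "a \<in> longset"
  then obtain j s where "a = (\<lambda>i. 2 * s * eps j i)" "s \<in> {1,-1}" unfolding longset_def by blast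
  then show ?thesis
  proof (cases "s = 1")
    case True then show ?thesis using \<open>a = _\<close> by (intro exI[of _ 2] exI[of _ j]) (auto simp: sv_def)
  next
    case False then have "s = -1" using \<open>s \<in> _\<close> by auto
    then show ?thesis using \<open>a = _\<close> by (intro exI[of _ "-2"] exI[of _ j]) (auto simp: sv_def)
  qed
qed

lemma even_sign: "(a::int) = 1 \<or> a = -1 \<Longrightarrow> b = 1 \<or> b = -1 \<Longrightarrow> even (a + b)"
  by auto

lemma scond_sub: "scond X S \<Longrightarrow> X \<noteq> A1 \<Longrightarrow> (even q \<or> X \<in> {C1, B2, BC2}) \<Longrightarrow> scond X (S - q * x)"
  by (cases X) (auto simp: scond_def)

lemma step_D:
  assumes D: "dat X lam mu \<sigma> e m F" and a: "a \<in> Dset" and A: "X \<noteq> A1"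
    and q: "of_int n * lam cc / kappa X = Mf X * lam cc * of_int q" and pos: "lam cc > 0"
  shows "\<exists>\<sigma>' e' m' F'. dat X lam (refl X (a, n) mu) \<sigma>' e' m' F'"
proof -
  obtain \<alpha> \<beta> j k where f: "j \<noteq> k" "\<alpha> = 1 \<or> \<alpha> = -1" "\<beta> = 1 \<or> \<beta> = (-1::int)" "a = pv (of_int \<alpha>) (of_int \<beta>) j k"
    using Dset_form[OF a] by blast
  have es: "e j = 1 \<or> e j = -1" "e k = 1 \<or> e k = -1" using D unfolding dat_def by auto
  have "even (\<alpha> * e j + \<beta> * e k)" using f(2,3) es by (intro even_sign) auto
  then obtain w where w: "\<alpha> * e j + \<beta> * e k = 2 * w" by blast
  have sc: "scond X (sum m F - q * (\<alpha> * e j + \<beta> * e k))"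
    unfolding w using scond_sub[of X "sum m F" "q * 2" w] D A unfolding dat_def by (simp add: mult.assoc)
  show ?thesis unfolding f(4) by (rule step_pv[OF D f(1-3) q sc]) (use A pos in auto)
qed

lemma step_S:
  assumes D: "dat X lam mu \<sigma> e m F" and a: "a \<in> shortset \<union> longset" and A: "X \<noteq> A1" and pos: "lam cc > 0"
    and hq: "\<And>\<gamma>::int. \<gamma> \<in> {1, -1, 2, -2} \<Longrightarrow> (\<gamma> \<in> {2, -2} \<longleftrightarrow> a \<in> longset) \<Longrightarrow>
       \<exists>q. 2 * of_int n * lam cc / (kappa X * of_int \<gamma>) = Mf X * lam cc * of_int q \<and> (even q \<or> X \<in> {C1, B2, BC2})"
  shows "\<exists>\<sigma>' e' m' F'. dat X lam (refl X (a, n) mu) \<sigma>' e' m' F'"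
proof -
  obtain \<gamma> j where f: "\<gamma> \<in> {1, -1, 2, -2}" "\<gamma> \<in> {2, -2} \<longleftrightarrow> a \<in> longset" "a = sv (of_int \<gamma>) j"
  proof (cases "a \<in> longset")
    case True then show ?thesis using long_form that by fastforce
  next
    case False then have "a \<in> shortset" using a by auto
    then show ?thesis using short_form that False by fastforce
  qed
  obtain q where q: "2 * of_int n * lam cc / (kappa X * of_int \<gamma>) = Mf X * lam cc * of_int q"
    and ev: "even q \<or> X \<in> {C1, B2, BC2}" using hq[OF f(1,2)] by blast
  have sc: "scond X (sum m F - q * e j)" using scond_sub[OF _ A ev] D unfolding dat_def by auto
  have g0: "\<gamma> \<noteq> 0" using f(1) by auto
  show ?thesis unfolding f(3) by (rule step_sv[OF D g0 q sc A pos])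
qed



lemma short_long_disj: "a \<in> shortset \<Longrightarrow> a \<notin> longset"
proof
  assume s: "a \<in> shortset" and l: "a \<in> longset"
  from s obtain j s where a: "a = (\<lambda>i. s * eps j i)" "s \<in> {1,-1}" unfolding shortset_def by blast
  from l obtain k t where b: "a = (\<lambda>i. 2 * t * eps k i)" "t \<in> {1,-1}" unfolding longset_def by blast
  have "a j = s" using a by (simp add: eps_def)
  moreover have "a j \<in> {0, 2, -2}" using b by (auto simp: eps_def)
  ultimately show False using a(2) by auto
qed

lemma dat_base: "linear_functional lam \<Longrightarrow> dat X lam lam id (\<lambda>_. 1) (\<lambda>_. 0) {}"
  unfolding dat_def by (cases X) (auto simp: scond_def)

lemma orbit_dat:
  assumes lin: "linear_functional lam" and pos: "lam cc > 0" and mu: "mu \<in> orbit X lam"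
  shows "\<exists>\<sigma> e m F. dat X lam mu \<sigma> e m F"
  using mu
proof (induction rule: orbit.induct)
  case base
  then show ?case using dat_base[OF lin] by blast
next
  case (step mu r)
  then obtain \<sigma> e m F where D: "dat X lam mu \<sigma> e m F" by blast
  obtain a n where r: "r = (a, n)" by (cases r)
  have rr: "(a, n) \<in> roots X" using step r by simp
  have shg: "\<gamma> = 1 \<or> \<gamma> = -1" if "a \<in> shortset" "\<gamma> \<in> {1, -1, 2, -2::int}" "\<gamma> \<in> {2, -2} \<longleftrightarrow> a \<in> longset" for \<gamma>
  proof -
    have "a \<notin> longset" using short_long_disj that(1) by blast
    then have "\<gamma> \<notin> {2, -2}" using that(3) by blast
    then show ?thesis using that(2) by simp
  qed
  have lgg: "\<gamma> = 2 \<or> \<gamma> = -2" if "a \<in> longset" "\<gamma> \<in> {1, -1, 2, -2::int}" "\<gamma> \<in> {2, -2} \<longleftrightarrow> a \<in> longset" for \<gamma>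
    using that by auto
  have ql: "\<exists>q. 2 * of_int n * lam cc / (kappa X * of_int \<gamma>) = Mf X * lam cc * of_int q \<and> (even q \<or> X \<in> {C1, B2, BC2})"
    if "\<gamma> = 2 \<or> \<gamma> = -2" "X \<in> {C1, C2, BC2}" "X = C2 \<longrightarrow> even n" for \<gamma>
    using that by (intro exI[of _ "n * (\<gamma> div 2)"]) (auto simp: kappa_def Mf_def field_simps)
  have qs: "\<exists>q. 2 * of_int n * lam cc / (kappa X * of_int \<gamma>) = Mf X * lam cc * of_int q \<and> (even q \<or> X \<in> {C1, B2, BC2})"
    if "\<gamma> = 1 \<or> \<gamma> = -1" "X \<in> {B1, BC2}" for \<gamma>
    using that by (intro exI[of _ "2 * n * \<gamma>"]) (auto simp: kappa_def Mf_def field_simps)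
  have qs2: "\<exists>q. 2 * of_int n * lam cc / (kappa X * of_int \<gamma>) = Mf X * lam cc * of_int q \<and> (even q \<or> X \<in> {C1, B2, BC2})"
    if "\<gamma> = 1 \<or> \<gamma> = -1" "X = B2" for \<gamma>
    using that by (intro exI[of _ "n * \<gamma>"]) (auto simp: kappa_def Mf_def field_simps)
  have qd1: "of_int n * lam cc / kappa X = Mf X * lam cc * of_int n" if "X \<in> {B1, C1, D1, C2, BC2}"
    using that by (auto simp: kappa_def Mf_def)
  have qd2: "of_int n * lam cc / kappa X = Mf X * lam cc * of_int (n div 2)" if "X = B2" "even n"
    using that by (auto simp: kappa_def Mf_def elim!: evenE)
  have "\<exists>\<sigma>' e' m' F'. dat X lam (refl X (a, n) mu) \<sigma>' e' m' F'"
  proof (cases X)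
    case A1
    then have "a \<in> Aset" using rr by (simp add: roots_def)
    then obtain j k where jk: "j \<noteq> k" "a = pv (of_int 1) (of_int (-1)) j k"
      using Aset_form by blast
    have sc: "scond X (sum m F - n * (1 * e j + (-1) * e k))" using D A1 unfolding dat_def by auto
    show ?thesis unfolding jk(2)
      by (rule step_pv[OF D jk(1) _ _ _ sc]) (use pos A1 in \<open>auto simp: kappa_def Mf_def\<close>)
  next
    case B1
    then have "a \<in> Dset \<or> a \<in> shortset" using rr by (auto simp: roots_def Bset_def)
    then show ?thesis
    proof
      assume "a \<in> Dset" then show ?thesis using step_D[OF D _ _ qd1 pos] B1 by auto
    next
      assume a: "a \<in> shortset"
      show ?thesis
      proof (rule step_S[OF D _ _ pos])
        fix \<gamma> :: int assume g: "\<gamma> \<in> {1, -1, 2, -2}" "\<gamma> \<in> {2, -2} \<longleftrightarrow> a \<in> longset"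
        have "\<gamma> = 1 \<or> \<gamma> = - 1" by (rule shg[OF a g])
        then show "\<exists>q. 2 * of_int n * lam cc / (kappa X * of_int \<gamma>) = Mf X * lam cc * of_int q \<and> (even q \<or> X \<in> {C1, B2, BC2})"
          by (rule qs) (use B1 a in auto)
      qed (use B1 a in auto)
    qed
  next
    case C1
    then have "a \<in> Dset \<or> a \<in> longset" using rr by (auto simp: roots_def Cset_def)
    then show ?thesis
    proof
      assume "a \<in> Dset" then show ?thesis using step_D[OF D _ _ qd1 pos] C1 by auto
    next
      assume a: "a \<in> longset"
      show ?thesis
      proof (rule step_S[OF D _ _ pos])
        fix \<gamma> :: int assume g: "\<gamma> \<in> {1, -1, 2, -2}" "\<gamma> \<in> {2, -2} \<longleftrightarrow> a \<in> longset"
        have "\<gamma> = 2 \<or> \<gamma> = - 2" by (rule lgg[OF _ g]) (use a in auto)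
        then show "\<exists>q. 2 * of_int n * lam cc / (kappa X * of_int \<gamma>) = Mf X * lam cc * of_int q \<and> (even q \<or> X \<in> {C1, B2, BC2})"
          by (rule ql) (use C1 a in auto)
      qed (use C1 a in auto)
    qed
  next
    case D1
    then have "a \<in> Dset" using rr by (auto simp: roots_def)
    then show ?thesis using step_D[OF D _ _ qd1 pos] D1 by auto
  next
    case B2
    then have "(a \<in> Dset \<and> even n) \<or> a \<in> shortset" using rr by (auto simp: roots_def Bset_def)
    then show ?thesis
    proof
      assume "a \<in> Dset \<and> even n" then show ?thesis using step_D[OF D _ _ qd2 pos] B2 by auto
    next
      assume a: "a \<in> shortset"
      show ?thesis
      proof (rule step_S[OF D _ _ pos])
        fix \<gamma> :: int assume g: "\<gamma> \<in> {1, -1, 2, -2}" "\<gamma> \<in> {2, -2} \<longleftrightarrow> a \<in> longset"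
        have "\<gamma> = 1 \<or> \<gamma> = - 1" by (rule shg[OF a g])
        then show "\<exists>q. 2 * of_int n * lam cc / (kappa X * of_int \<gamma>) = Mf X * lam cc * of_int q \<and> (even q \<or> X \<in> {C1, B2, BC2})"
          by (rule qs2) (use B2 a in auto)
      qed (use B2 a in auto)
    qed
  next
    case C2
    then have "a \<in> Dset \<or> (a \<in> longset \<and> even n)" using rr by (auto simp: roots_def Cset_def)
    then show ?thesis
    proof
      assume "a \<in> Dset" then show ?thesis using step_D[OF D _ _ qd1 pos] C2 by auto
    next
      assume a: "a \<in> longset \<and> even n"
      show ?thesis
      proof (rule step_S[OF D _ _ pos])
        fix \<gamma> :: int assume g: "\<gamma> \<in> {1, -1, 2, -2}" "\<gamma> \<in> {2, -2} \<longleftrightarrow> a \<in> longset"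
        have "\<gamma> = 2 \<or> \<gamma> = - 2" by (rule lgg[OF _ g]) (use a in auto)
        then show "\<exists>q. 2 * of_int n * lam cc / (kappa X * of_int \<gamma>) = Mf X * lam cc * of_int q \<and> (even q \<or> X \<in> {C1, B2, BC2})"
          by (rule ql) (use C2 a in auto)
      qed (use C2 a in auto)
    qed
  next
    case BC2
    then have "a \<in> Dset \<or> a \<in> shortset \<or> a \<in> longset" using rr by (auto simp: roots_def Bset_def Cset_def BCset_def)
    then show ?thesis
    proof (elim disjE)
      assume "a \<in> Dset" then show ?thesis using step_D[OF D _ _ qd1 pos] BC2 by auto
    next
      assume a: "a \<in> shortset"
      show ?thesis
      proof (rule step_S[OF D _ _ pos])
        fix \<gamma> :: int assume g: "\<gamma> \<in> {1, -1, 2, -2}" "\<gamma> \<in> {2, -2} \<longleftrightarrow> a \<in> longset"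
        have "\<gamma> = 1 \<or> \<gamma> = - 1" by (rule shg[OF a g])
        then show "\<exists>q. 2 * of_int n * lam cc / (kappa X * of_int \<gamma>) = Mf X * lam cc * of_int q \<and> (even q \<or> X \<in> {C1, B2, BC2})"
          by (rule qs) (use BC2 a in auto)
      qed (use BC2 a in auto)
    next
      assume a: "a \<in> longset"
      show ?thesis
      proof (rule step_S[OF D _ _ pos])
        fix \<gamma> :: int assume g: "\<gamma> \<in> {1, -1, 2, -2}" "\<gamma> \<in> {2, -2} \<longleftrightarrow> a \<in> longset"
        have "\<gamma> = 2 \<or> \<gamma> = - 2" by (rule lgg[OF _ g]) (use a in auto)
        then show "\<exists>q. 2 * of_int n * lam cc / (kappa X * of_int \<gamma>) = Mf X * lam cc * of_int q \<and> (even q \<or> X \<in> {C1, B2, BC2})"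
          by (rule ql) (use BC2 a in auto)
      qed (use BC2 a in auto)
    qed
  qed
  then show ?case using r by simp
qed



lemma int_abs_sq: "\<bar>real_of_int m\<bar> \<le> (real_of_int m)^2"
proof (cases "m = 0")
  case False
  then have "1 \<le> \<bar>real_of_int m\<bar>" by linarith
  then have "\<bar>real_of_int m\<bar> * 1 \<le> \<bar>real_of_int m\<bar> * \<bar>real_of_int m\<bar>" by (intro mult_left_mono) auto
  then show ?thesis by (simp add: power2_eq_square)
qed simp

lemma Tq_alt: "Tq B l m = B * (2 * l * of_int m + B * (of_int m)^2)"
  unfolding Tq_def by (simp add: algebra_simps power2_eq_square)

lemma lm_bound: "2 * l * of_int m \<ge> - (2 * \<bar>l\<bar> * \<bar>real_of_int m\<bar>)"
proof -
  have "\<bar>2 * l * of_int m\<bar> = 2 * \<bar>l\<bar> * \<bar>real_of_int m\<bar>" by (simp add: abs_mult)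
  then show ?thesis by linarith
qed

lemma tq_box: assumes B: "B > 0" and l: "\<bar>l\<bar> \<le> B / 2" shows "Tq B l m \<ge> 0"
proof -
  have "2 * \<bar>l\<bar> * \<bar>real_of_int m\<bar> \<le> B * \<bar>real_of_int m\<bar>" using l by (intro mult_right_mono) auto
  moreover have "B * \<bar>real_of_int m\<bar> \<le> B * (of_int m)^2" using int_abs_sq B by (intro mult_left_mono) auto
  ultimately have "2 * l * of_int m + B * (of_int m)^2 \<ge> 0" using lm_bound[of l m] by linarith
  then show ?thesis unfolding Tq_alt using B by simp
qed

lemma tq_odd: assumes B: "B > 0" and l: "\<bar>l\<bar> \<le> B" and m: "m \<noteq> 0" shows "Tq B l m \<ge> B * (B - 2 * \<bar>l\<bar>)"
proof -
  define u where "u = \<bar>real_of_int m\<bar>"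
  have u1: "u \<ge> 1" using m unfolding u_def by linarith
  have sq: "(of_int m)^2 = u * u" unfolding u_def by (simp add: power2_eq_square abs_mult_self_eq)
  have "(u - 1) * (B * (u + 1) - 2 * \<bar>l\<bar>) \<ge> 0"
  proof (rule mult_nonneg_nonneg)
    show "u - 1 \<ge> 0" using u1 by simp
    have "B * (u + 1) \<ge> B * 2" using u1 B by (intro mult_left_mono) auto
    then show "B * (u + 1) - 2 * \<bar>l\<bar> \<ge> 0" using l by linarith
  qed
  then have "B * (u * u) - 2 * \<bar>l\<bar> * u \<ge> B - 2 * \<bar>l\<bar>" by (simp add: algebra_simps)
  then have "2 * l * of_int m + B * (of_int m)^2 \<ge> B - 2 * \<bar>l\<bar>" using lm_bound[of l m] unfolding sq u_def by linarith
  then show ?thesis unfolding Tq_alt using B by (intro mult_left_mono) auto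
qed

lemma tq_even: assumes B: "B > 0" and l: "\<bar>l\<bar> \<le> B" and m: "even m" shows "Tq B l m \<ge> 0"
proof (cases "m = 0")
  case True then show ?thesis by (simp add: Tq_def)
next
  case False
  define u where "u = \<bar>real_of_int m\<bar>"
  have "\<bar>m\<bar> \<ge> 2" using m False by (auto elim!: evenE)
  then have u2: "u \<ge> 2" unfolding u_def by linarith
  have sq: "(of_int m)^2 = u * u" unfolding u_def by (simp add: power2_eq_square abs_mult_self_eq)
  have "u * (B * u - 2 * \<bar>l\<bar>) \<ge> 0"
  proof (rule mult_nonneg_nonneg)
    show "u \<ge> 0" using u2 by simp
    have "B * u \<ge> B * 2" using u2 B by (intro mult_left_mono) auto
    then show "B * u - 2 * \<bar>l\<bar> \<ge> 0" using l by linarith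
  qed
  then have "2 * l * of_int m + B * (of_int m)^2 \<ge> 0" using lm_bound[of l m] unfolding sq u_def by (simp add: algebra_simps)
  then show ?thesis unfolding Tq_alt using B by simp
qed

lemma Q_box: assumes "B > 0" "\<And>i. i \<in> F \<Longrightarrow> \<bar>l i\<bar> \<le> B / 2" shows "(\<Sum>i\<in>F. Tq B (l i) (m i)) \<ge> 0"
  using assms tq_box by (intro sum_nonneg) auto

lemma Q_A: assumes B: "B > 0" and fF: "finite F" and s0: "sum m F = 0" and c: "\<And>i j. l i - l j \<le> B"
  shows "(\<Sum>i\<in>F. Tq B (l i) (m i)) \<ge> 0"
proof (cases "F = {}")
  case True then show ?thesis by simp
next
  case False
  define c0 where "c0 = (Max (l ` F) + Min (l ` F)) / 2"
  have "Max (l ` F) \<in> l ` F" using fF False by (intro Max_in) auto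
  then obtain a where a: "a \<in> F" "l a = Max (l ` F)" by auto
  have "Min (l ` F) \<in> l ` F" using fF False by (intro Min_in) auto
  then obtain b where b: "b \<in> F" "l b = Min (l ` F)" by auto
  have bd: "\<bar>l i - c0\<bar> \<le> B / 2" if "i \<in> F" for i
  proof -
    have "l i \<le> l a" using a that fF by simp
    moreover have "l b \<le> l i" using b that fF by simp
    moreover have "l a - l b \<le> B" by (rule c)
    ultimately show ?thesis unfolding c0_def a(2)[symmetric] b(2)[symmetric] by (simp add: abs_le_iff field_simps)
  qed
  have "(\<Sum>i\<in>F. Tq B (l i) (m i)) = (\<Sum>i\<in>F. Tq B (l i - c0) (m i) + 2 * c0 * B * of_int (m i))"
    unfolding Tq_def by (intro sum.cong) (auto simp: algebra_simps)
  also have "\<dots> = (\<Sum>i\<in>F. Tq B (l i - c0) (m i)) + 2 * c0 * B * of_int (sum m F)"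
    by (simp add: sum.distrib sum_distrib_left)
  also have "\<dots> = (\<Sum>i\<in>F. Tq B (l i - c0) (m i))" using s0 by simp
  finally show ?thesis using Q_box[of B F "\<lambda>i. l i - c0" m] B bd by simp
qed



lemma Q_even: assumes B: "B > 0" and fF: "finite F" and s0: "even (sum m F)"
    and c: "\<And>i j. i \<noteq> j \<Longrightarrow> \<bar>l i\<bar> + \<bar>l j\<bar> \<le> B" and c1: "\<And>i. \<bar>l i\<bar> \<le> B"
  shows "(\<Sum>i\<in>F. Tq B (l i) (m i)) \<ge> 0"
proof (cases "\<forall>i\<in>F. \<bar>l i\<bar> \<le> B / 2")
  case True then show ?thesis using Q_box[OF B, of F l m] by auto
next
  case False
  then obtain j where j: "j \<in> F" "\<bar>l j\<bar> > B / 2" by auto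
  have oth: "\<bar>l i\<bar> \<le> B / 2" if "i \<noteq> j" for i using c[OF that] j(2) by linarith
  show ?thesis
  proof (cases "even (m j)")
    case True
    have "Tq B (l i) (m i) \<ge> 0" if "i \<in> F" for i
    proof (cases "i = j")
      case True then show ?thesis using tq_even[OF B c1[of j], of "m j"] \<open>even (m j)\<close> by simp
    next
      case False then show ?thesis using tq_box[OF B oth[OF False]] by simp
    qed
    then show ?thesis by (intro sum_nonneg) auto
  next
    case False
    have "sum m F = m j + sum m (F - {j})" using fF j(1) by (simp add: sum.remove)
    then have "sum m (F - {j}) = sum m F - m j" by simp
    then have "odd (sum m (F - {j}))" using s0 False by simp
    moreover have "(\<forall>i\<in>F - {j}. even (m i)) \<Longrightarrow> even (sum m (F - {j}))" by (rule dvd_sum) simp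
    ultimately obtain k where k: "k \<in> F - {j}" "odd (m k)" by blast
    have kj: "k \<noteq> j" "k \<in> F" using k by auto
    have h1: "(\<Sum>i\<in>F. Tq B (l i) (m i)) = Tq B (l j) (m j) + (\<Sum>i\<in>F - {j}. Tq B (l i) (m i))"
      using fF j(1) by (rule sum.remove)
    have h2: "(\<Sum>i\<in>F - {j}. Tq B (l i) (m i)) = Tq B (l k) (m k) + (\<Sum>i\<in>F - {j} - {k}. Tq B (l i) (m i))"
      using fF k(1) by (intro sum.remove) auto
    have "(\<Sum>i\<in>F. Tq B (l i) (m i)) = Tq B (l j) (m j) + Tq B (l k) (m k) + (\<Sum>i\<in>F - {j} - {k}. Tq B (l i) (m i))"
      using h1 h2 by linarith
    moreover have "Tq B (l j) (m j) \<ge> B * (B - 2 * \<bar>l j\<bar>)" proof -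
      have "m j \<noteq> 0" using False by auto
      then show ?thesis by (rule tq_odd[OF B c1])
    qed
    moreover have "Tq B (l k) (m k) \<ge> B * (B - 2 * \<bar>l k\<bar>)" proof -
      have "m k \<noteq> 0" using k(2) by auto
      then show ?thesis by (rule tq_odd[OF B c1])
    qed
    moreover have "(\<Sum>i\<in>F - {j} - {k}. Tq B (l i) (m i)) \<ge> 0"
    proof (rule sum_nonneg)
      fix i assume "i \<in> F - {j} - {k}"
      then have "i \<noteq> j" by auto
      then show "Tq B (l i) (m i) \<ge> 0" by (rule tq_box[OF B oth])
    qed
    moreover have "B * (B - 2 * \<bar>l j\<bar>) + B * (B - 2 * \<bar>l k\<bar>) \<ge> 0"
    proof -
      have "B * (B - 2 * \<bar>l j\<bar>) + B * (B - 2 * \<bar>l k\<bar>) = B * (2 * (B - \<bar>l j\<bar> - \<bar>l k\<bar>))" by (simp add: algebra_simps)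
      moreover have "B - \<bar>l j\<bar> - \<bar>l k\<bar> \<ge> 0" using c[of j k] kj by simp
      ultimately show ?thesis using B by simp
    qed
    ultimately show ?thesis by linarith
  qed
qed



lemma ereal_cond:
  fixes f :: "'j \<Rightarrow> real"
  shows "(SUP j. ereal (f j)) - (INF j. ereal (f j)) \<le> ereal c \<longleftrightarrow> (\<forall>i j. f i - f j \<le> c)"
proof
  assume H: "(SUP j. ereal (f j)) - (INF j. ereal (f j)) \<le> ereal c"
  show "\<forall>i j. f i - f j \<le> c"
  proof (intro allI)
    fix i j
    have "ereal (f i) \<le> (SUP j. ereal (f j))" by (rule SUP_upper) simp
    moreover have "(INF j. ereal (f j)) \<le> ereal (f j)" by (rule INF_lower) simp
    ultimately have "ereal (f i) - ereal (f j) \<le> (SUP j. ereal (f j)) - (INF j. ereal (f j))"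
      by (rule ereal_minus_mono)
    then have "ereal (f i) - ereal (f j) \<le> ereal c" using H by (rule order_trans)
    then show "f i - f j \<le> c" by simp
  qed
next
  assume H: "\<forall>i j. f i - f j \<le> c"
  obtain j0 :: 'j where True by simp
  have su: "(SUP j. ereal (f j)) \<le> ereal (f k + c)" for k
    by (rule SUP_least) (use H in \<open>auto simp: algebra_simps\<close>)
  have sl: "ereal (f j0) \<le> (SUP j. ereal (f j))" by (rule SUP_upper) simp
  obtain S where S: "(SUP j. ereal (f j)) = ereal S"
    using su[of j0] sl by (cases "(SUP j. ereal (f j))") auto
  have Sk: "S - c \<le> f k" for k using su[of k] unfolding S by simp
  have il: "ereal (S - c) \<le> (INF j. ereal (f j))" by (rule INF_greatest) (use Sk in auto)
  have iu: "(INF j. ereal (f j)) \<le> ereal (f j0)" by (rule INF_lower) simp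
  obtain I where I: "(INF j. ereal (f j)) = ereal I"
    using il iu by (cases "(INF j. ereal (f j))") auto
  have "S - I \<le> c" using il unfolding I by simp
  then show "(SUP j. ereal (f j)) - (INF j. ereal (f j)) \<le> ereal c" unfolding S I by simp
qed

definition cnd :: "rtype \<Rightarrow> ('j \<Rightarrow> real) \<Rightarrow> real \<Rightarrow> bool" where
  "cnd X l lc = (case X of
      A1 \<Rightarrow> (\<forall>i j. l i - l j \<le> lc)
    | B1 \<Rightarrow> (\<forall>j k. j \<noteq> k \<longrightarrow> \<bar>l j\<bar> + \<bar>l k\<bar> \<le> lc)
    | C1 \<Rightarrow> (\<forall>j. \<bar>l j\<bar> \<le> lc)
    | D1 \<Rightarrow> (\<forall>j k. j \<noteq> k \<longrightarrow> \<bar>l j\<bar> + \<bar>l k\<bar> \<le> lc)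
    | B2 \<Rightarrow> (\<forall>j. \<bar>l j\<bar> \<le> lc)
    | C2 \<Rightarrow> (\<forall>j k. j \<noteq> k \<longrightarrow> \<bar>l j\<bar> + \<bar>l k\<bar> \<le> 2 * lc)
    | BC2 \<Rightarrow> (\<forall>j. \<bar>l j\<bar> \<le> lc))"

lemma dmin_cnd: "dmin_cond X lam \<longleftrightarrow> cnd X (\<lambda>j. lam (Ej j)) (lam cc)"
  unfolding dmin_cond_def cnd_def Let_def by (cases X) (simp_all add: ereal_cond)

lemma other_idx: assumes "infinite (UNIV :: 'j set)" shows "\<exists>k::'j. k \<noteq> i"
proof -
  have "UNIV \<noteq> {i}" using assms by (metis finite.emptyI finite_insert)
  then show ?thesis by auto
qed

lemma suff:
  fixes lam :: "'j tg \<Rightarrow> real"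
  assumes inf: "infinite (UNIV :: 'j set)" and lin: "linear_functional lam" and pos: "lam cc > 0"
    and c: "cnd X (\<lambda>j. lam (Ej j)) (lam cc)"
  shows "d_minimal X lam"
  unfolding d_minimal_def
proof
  fix mu assume "mu \<in> orbit X lam"
  then obtain \<sigma> e m F where D: "dat X lam mu \<sigma> e m F" using orbit_dat[OF lin pos] by blast
  define B where "B = Mf X * lam cc"
  define l where "l j = lam (Ej j)" for j
  have B0: "B > 0" unfolding B_def Mf_def using pos by auto
  have fF: "finite F" and sc: "scond X (sum m F)"
    and md: "mu dd = lam dd + kappa X / (2 * lam cc) * (\<Sum>i\<in>F. Tq B (l i) (m i))"
    using D unfolding dat_def B_def l_def by auto
  have Q: "(\<Sum>i\<in>F. Tq B (l i) (m i)) \<ge> 0"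
  proof (cases X)
    case A1
    then show ?thesis using c sc B_def by (intro Q_A[OF B0 fF]) (auto simp: cnd_def scond_def Mf_def l_def)
  next
    case C1 then show ?thesis using c by (intro Q_box[OF B0]) (auto simp: cnd_def B_def Mf_def l_def)
  next
    case B2 then show ?thesis using c by (intro Q_box[OF B0]) (auto simp: cnd_def B_def Mf_def l_def)
  next
    case BC2 then show ?thesis using c by (intro Q_box[OF B0]) (auto simp: cnd_def B_def Mf_def l_def)
  next
    case B1
    have cc: "\<And>i j. i \<noteq> j \<Longrightarrow> \<bar>l i\<bar> + \<bar>l j\<bar> \<le> B" using c B1 by (auto simp: cnd_def B_def Mf_def l_def)
    have c1: "\<bar>l i\<bar> \<le> B" for i
    proof -
      obtain k where "k \<noteq> i" using other_idx[OF inf] by blast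
      then show ?thesis using cc[of i k] by simp
    qed
    show ?thesis using sc B1 by (intro Q_even[OF B0 fF _ cc c1]) (auto simp: scond_def)
  next
    case D1
    have cc: "\<And>i j. i \<noteq> j \<Longrightarrow> \<bar>l i\<bar> + \<bar>l j\<bar> \<le> B" using c D1 by (auto simp: cnd_def B_def Mf_def l_def)
    have c1: "\<bar>l i\<bar> \<le> B" for i
    proof -
      obtain k where "k \<noteq> i" using other_idx[OF inf] by blast
      then show ?thesis using cc[of i k] by simp
    qed
    show ?thesis using sc D1 by (intro Q_even[OF B0 fF _ cc c1]) (auto simp: scond_def)
  next
    case C2
    have cc: "\<And>i j. i \<noteq> j \<Longrightarrow> \<bar>l i\<bar> + \<bar>l j\<bar> \<le> B" using c C2 by (auto simp: cnd_def B_def Mf_def l_def)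
    have c1: "\<bar>l i\<bar> \<le> B" for i
    proof -
      obtain k where "k \<noteq> i" using other_idx[OF inf] by blast
      then show ?thesis using cc[of i k] by simp
    qed
    show ?thesis using sc C2 by (intro Q_even[OF B0 fF _ cc c1]) (auto simp: scond_def)
  qed
  have "kappa X / (2 * lam cc) \<ge> 0" using kappa_pos[of X] pos by simp
  then have "kappa X / (2 * lam cc) * (\<Sum>i\<in>F. Tq B (l i) (m i)) \<ge> 0" using Q by (rule mult_nonneg_nonneg)
  then show "lam dd \<le> mu dd" unfolding md by simp
qed



definition sg :: "real \<Rightarrow> real" where "sg x = (if x \<ge> 0 then 1 else -1)"
lemma sg_abs: "sg x * x = \<bar>x\<bar>" by (simp add: sg_def)
lemma sg_in: "sg x \<in> {1, -1}" by (simp add: sg_def)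

lemma decr: assumes "r \<in> roots X" "refl X r lam dd < lam dd" shows "\<not> d_minimal X lam"
proof -
  have "refl X r lam \<in> orbit X lam" using assms(1) by (intro orbit.step orbit.base)
  then show ?thesis using assms(2) unfolding d_minimal_def by force
qed

lemma pv_D: "j \<noteq> k \<Longrightarrow> s \<in> {1,-1} \<Longrightarrow> t \<in> {1,-1} \<Longrightarrow> pv s t j k \<in> Dset"
  unfolding Dset_def pv_def by blast

lemma pv_A: "j \<noteq> k \<Longrightarrow> pv 1 (-1) j k \<in> Aset"
proof -
  assume "j \<noteq> k"
  moreover have "pv 1 (-1) j k = (\<lambda>i. eps j i - eps k i)" unfolding pv_def by auto
  ultimately show ?thesis unfolding Aset_def by blast
qed

lemma sv_short: "s \<in> {1,-1} \<Longrightarrow> sv s j \<in> shortset"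
  unfolding shortset_def sv_def by blast

lemma sv_long: "s \<in> {1,-1} \<Longrightarrow> sv (2 * s) j \<in> longset"
  unfolding longset_def sv_def by blast

lemma pair_dec:
  assumes lin: "linear_functional lam" and jk: "j \<noteq> k" and pos: "lam cc > 0"
    and r: "(pv (sg (lam (Ej j))) (sg (lam (Ej k))) j k, 1) \<in> roots X"
    and gt: "\<bar>lam (Ej j)\<bar> + \<bar>lam (Ej k)\<bar> > lam cc / kappa X"
  shows "\<not> d_minimal X lam"
proof (rule decr[OF r])
  show "refl X (pv (sg (lam (Ej j))) (sg (lam (Ej k))) j k, 1) lam dd < lam dd"
    using refl_pv(2)[OF lin jk sg_in[of "lam (Ej j)"] sg_in[of "lam (Ej k)"], where X=X and n=1] gt by (simp add: sg_abs)
qed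

lemma single_dec:
  assumes lin: "linear_functional lam" and g: "\<gamma> \<noteq> 0"
    and r: "(sv \<gamma> j, 1) \<in> roots X"
    and gt: "2 / \<gamma> * lam (Ej j) - 2 / (kappa X * \<gamma>^2) * lam cc > 0"
  shows "\<not> d_minimal X lam"
proof (rule decr[OF r])
  show "refl X (sv \<gamma> j, 1) lam dd < lam dd"
    using refl_sv(2)[OF lin g, where X=X and j=j and n=1] gt by simp
qed

lemma nec:
  fixes lam :: "'j tg \<Rightarrow> real"
  assumes lin: "linear_functional lam" and pos: "lam cc > 0" and dm: "d_minimal X lam"
  shows "cnd X (\<lambda>j. lam (Ej j)) (lam cc)"
proof (rule ccontr)
  define l where "l j = lam (Ej j)" for j
  define lc where "lc = lam cc"
  assume N: "\<not> cnd X (\<lambda>j. lam (Ej j)) (lam cc)"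
  have pairc: "False" if "j \<noteq> k" "\<bar>l j\<bar> + \<bar>l k\<bar> > lc / kappa X"
      "(pv (sg (l j)) (sg (l k)) j k, 1) \<in> roots X" for j k
    using pair_dec[OF lin that(1) pos] that dm unfolding l_def lc_def by blast
  have longc: "False" if "\<bar>l j\<bar> > lc" "kappa X = 1/2" "(sv (2 * sg (l j)) j, 1) \<in> roots X" for j
  proof -
    have s: "sg (l j) \<in> {1, -1}" by (rule sg_in)
    have "2 / (2 * sg (l j)) * l j - 2 / (kappa X * (2 * sg (l j))^2) * lc = \<bar>l j\<bar> - lc"
      unfolding that(2) by (cases "l j \<ge> 0") (simp_all add: sg_def power2_eq_square)
    then show False using single_dec[OF lin _ that(3)] that(1) dm s unfolding l_def lc_def by auto
  qed
  have shortc: "False" if "\<bar>l j\<bar> > lc" "kappa X = 1" "(sv (sg (l j)) j, 1) \<in> roots X" for j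
  proof -
    have s: "sg (l j) \<in> {1, -1}" by (rule sg_in)
    have "2 / (sg (l j)) * l j - 2 / (kappa X * (sg (l j))^2) * lc = 2 * (\<bar>l j\<bar> - lc)"
      unfolding that(2) by (cases "l j \<ge> 0") (simp_all add: sg_def power2_eq_square)
    then show False using single_dec[OF lin _ that(3)] that(1) dm s unfolding l_def lc_def by auto
  qed
  show False
  proof (cases X)
    case A1
    then obtain i j where ij: "l i - l j > lc" using N unfolding cnd_def l_def lc_def by (auto simp: not_le)
    then have "i \<noteq> j" using pos unfolding lc_def by auto
    then have r: "(pv 1 (-1) i j, 1) \<in> roots X" using A1 pv_A by (auto simp: roots_def)
    have "refl X (pv 1 (-1) i j, 1) lam dd < lam dd"
      using refl_pv(2)[OF lin \<open>i \<noteq> j\<close>, where \<alpha>=1 and \<beta>="-1" and X=X and n=1] ij A1 unfolding l_def lc_def by (simp add: kappa_def)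
    then show False using decr[OF r] dm by blast
  next
    case B1
    then obtain j k where jk: "j \<noteq> k" "\<bar>l j\<bar> + \<bar>l k\<bar> > lc" using N unfolding cnd_def l_def lc_def by (auto simp: not_le)
    show False using pairc[OF jk(1)] jk B1 pv_D[OF jk(1) sg_in sg_in] by (auto simp: roots_def kappa_def Bset_def)
  next
    case D1
    then obtain j k where jk: "j \<noteq> k" "\<bar>l j\<bar> + \<bar>l k\<bar> > lc" using N unfolding cnd_def l_def lc_def by (auto simp: not_le)
    show False using pairc[OF jk(1)] jk D1 pv_D[OF jk(1) sg_in sg_in] by (auto simp: roots_def kappa_def)
  next
    case C2
    then obtain j k where jk: "j \<noteq> k" "\<bar>l j\<bar> + \<bar>l k\<bar> > 2 * lc" using N unfolding cnd_def l_def lc_def by (auto simp: not_le)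
    show False using pairc[OF jk(1)] jk C2 pv_D[OF jk(1) sg_in sg_in] by (auto simp: roots_def kappa_def)
  next
    case C1
    then obtain j where j: "\<bar>l j\<bar> > lc" using N unfolding cnd_def l_def lc_def by (auto simp: not_le)
    show False using longc[OF j] C1 sv_long[OF sg_in[of "l j"], of j] by (auto simp: roots_def kappa_def Cset_def)
  next
    case BC2
    then obtain j where j: "\<bar>l j\<bar> > lc" using N unfolding cnd_def l_def lc_def by (auto simp: not_le)
    show False using longc[OF j] BC2 sv_long[OF sg_in[of "l j"], of j] by (auto simp: roots_def kappa_def BCset_def Cset_def)
  next
    case B2
    then obtain j where j: "\<bar>l j\<bar> > lc" using N unfolding cnd_def l_def lc_def by (auto simp: not_le)
    show False using shortc[OF j] B2 sv_short[OF sg_in[of "l j"], of j] by (auto simp: roots_def kappa_def)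
  qed
qed

theorem theorem4p4:
  fixes X :: rtype and lam :: "'j tg \<Rightarrow> real"
  assumes "infinite (UNIV :: 'j set)"
    and "linear_functional lam"
    and "lam cc > 0"
  shows "d_minimal X lam \<longleftrightarrow> dmin_cond X lam"
  unfolding dmin_cnd using nec[OF assms(2,3)] suff[OF assms] by blast

end
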